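(* Let $\mathbf{C}$ and $\mathbf{D}$ be chain complexes of finite-dimensional real inner product spaces (concentrated in degrees $n\ge 0$), and let $\Phi:\mathbf{D}\to\mathbf{C}$, $\Psi:\mathbf{C}\to\mathbf{D}$ be chain maps together with a chain homotopy $h$ forming a deformation retract, i.e. $\Psi\Phi=\mathrm{id}_{\mathbf{D}}$ and $\partial h+h\partial=\mathrm{id}_{\mathbf{C}}-\Phi\Psi$. Then there exist a base of $\mathbf{C}$ and a Morse matching $\mathcal{M}$ on the resulting based chain complex such that the deformation retract $(\Psi,\Phi)$ is equivalent to the Morse retraction $(\Psi^{\mathcal{M}},\Phi^{\mathcal{M}})$ of $\mathcal{M}$ (a deformation retract $\mathbf{C}^{\mathcal M}\rightleftarrows\mathbf{C}$ of the same complex $\mathbf{C}$).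
   Context: A based chain complex of finite type over $\mathbb{R}$ is a chain complex $(\mathbf{C},\partial)$ of finite-dimensional real vector spaces $\mathbf{C}_n$, $n\ge0$, with pairwise disjoint finite index sets $I=\{I_n\}$ and a direct sum decomposition $\mathbf{C}_n=\bigoplus_{\alpha\in I_n}C_\alpha$ (elements of $I_n$ are called $n$-cells). For $\alpha\in I_n,\beta\in I_{n-1}$ let $\partial_{\beta,\alpha}=\pi_\beta\circ\partial_n\circ i_\alpha:C_\alpha\to C_\beta$, with $i_\alpha$ the inclusion of a summand and $\pi_\beta$ the projection onto a summand along the others. The graph $\mathcal G(\mathbf C)$ has vertices $\bigcup_n I_n$ and an edge $\alpha\to\beta$ whenever $\partial_{\beta,\alpha}\ne0$. A Morse matching is a set $M$ of edges such that (1) every vertex lies on at most one edge of $M$; (2) $\partial_{\beta,\alpha}$ is an isomorphism for every $\alpha\to\beta$ in $M$; (3) for each $n$, the relation on $I_n$ given by $\alpha\succ\beta$ iff there is a directed path from $\alpha$ to $\beta$ in $\mathcal G(\mathbf C)^M$ (the graph with the edges of $M$ reversed) is a partial order. Unmatched cells are critical; their set is $M^0$. The index $\mathcal I(\gamma)$ of a directed path $\gamma=(\sigma_0,\dots,\sigma_m)$ in $\mathcal G(\mathbf C)^M$ is the composite of the maps of its steps, where a non-reversed step $\sigma_i\to\sigma_{i+1}$ contributes $\partial_{\sigma_{i+1},\sigma_i}$ and a reversed matched edge contributes $-\partial_{\sigma_i,\sigma_{i+1}}^{-1}$ (the trivial path gives the identity); $\Gamma_{\beta,\alpha}=\sum_\gamma\mathcal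 I(\gamma):C_\alpha\to C_\beta$ over all paths from $\alpha$ to $\beta$ (zero if none). The Morse complex is $\mathbf C^M_n=\bigoplus_{\alpha\in I_n\cap M^0}C_\alpha$ with boundary $x\mapsto\sum_{\beta\in M^0\cap I_{n-1}}\Gamma_{\beta,\alpha}(x)$ for $x\in C_\alpha$, $\alpha\in M^0\cap I_n$. The Morse retraction consists of the chain maps $\Phi^M:\mathbf C^M\to\mathbf C$, $\Phi^M(x)=\sum_{\beta\in I_n}\Gamma_{\beta,\alpha}(x)$ for $x\in C_\alpha$, $\alpha\in M^0\cap I_n$, and $\Psi^M:\mathbf C\to\mathbf C^M$, $\Psi^M(x)=\sum_{\beta\in M^0\cap I_n}\Gamma_{\beta,\alpha}(x)$ for $x\in C_\alpha$, $\alpha\in I_n$; it is a deformation retract. Two deformation retracts $(\Psi:\mathbf C\to\mathbf D,\Phi:\mathbf D\to\mathbf C)$ and $(\Psi':\mathbf C'\to\mathbf D',\Phi':\mathbf D'\to\mathbf C')$ are equivalent if there are chain isomorphisms $f:\mathbf D\to\mathbf D'$, $g:\mathbf C\to\mathbf C'$ with $f\Psi=\Psi' g$ and $g\Phi=\Phi' f$. *)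

theory Defs
  imports "HOL-Analysis.Inner_Product"
begin

definition lin_on :: "'a::real_vector set \<Rightarrow> ('a \<Rightarrow> 'b::real_vector) \<Rightarrow> bool" where
  "lin_on A f \<longleftrightarrow> (\<forall>x\<in>A. \<forall>y\<in>A. f (x + y) = f x + f y) \<and> (\<forall>c. \<forall>x\<in>A. f (c *\<^sub>R x) = c *\<^sub>R f x)"

definition fin_dim_subspace :: "'a::real_vector set \<Rightarrow> bool" where
  "fin_dim_subspace A \<longleftrightarrow> subspace A \<and> (\<exists>B. finite B \<and> A = span B)"

definition chain_complex :: "(nat \<Rightarrow> 'a::real_vector set) \<Rightarrow> (nat \<Rightarrow> 'a \<Rightarrow> 'a) \<Rightarrow> bool" where
  "chain_complex C d \<longleftrightarrow>
     (\<forall>n. fin_dim_subspace (C n)) \<and> (\<forall>n. lin_on (C n) (d n)) \<and>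
     (\<forall>n. \<forall>x\<in>C n. d n x \<in> C (n - 1)) \<and> (\<forall>x\<in>C 0. d 0 x = 0) \<and>
     (\<forall>n. \<forall>x\<in>C (Suc n). d n (d (Suc n) x) = 0)"

definition chain_map ::
  "(nat \<Rightarrow> 'a::real_vector set) \<Rightarrow> (nat \<Rightarrow> 'a \<Rightarrow> 'a) \<Rightarrow> (nat \<Rightarrow> 'b::real_vector set) \<Rightarrow> (nat \<Rightarrow> 'b \<Rightarrow> 'b)
   \<Rightarrow> (nat \<Rightarrow> 'a \<Rightarrow> 'b) \<Rightarrow> bool" where
  "chain_map C d D e f \<longleftrightarrow>
     (\<forall>n. lin_on (C n) (f n)) \<and> (\<forall>n. \<forall>x\<in>C n. f n x \<in> D n) \<and>
     (\<forall>n. \<forall>x\<in>C n. e n (f n x) = f (n - 1) (d n x))"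

definition chain_iso ::
  "(nat \<Rightarrow> 'a::real_vector set) \<Rightarrow> (nat \<Rightarrow> 'a \<Rightarrow> 'a) \<Rightarrow> (nat \<Rightarrow> 'b::real_vector set) \<Rightarrow> (nat \<Rightarrow> 'b \<Rightarrow> 'b)
   \<Rightarrow> (nat \<Rightarrow> 'a \<Rightarrow> 'b) \<Rightarrow> bool" where
  "chain_iso C d D e f \<longleftrightarrow> chain_map C d D e f \<and> (\<forall>n. bij_betw (f n) (C n) (D n))"

definition deformation_retract ::
  "(nat \<Rightarrow> 'a::real_vector set) \<Rightarrow> (nat \<Rightarrow> 'a \<Rightarrow> 'a) \<Rightarrow> (nat \<Rightarrow> 'b::real_vector set) \<Rightarrow> (nat \<Rightarrow> 'b \<Rightarrow> 'b)
   \<Rightarrow> (nat \<Rightarrow> 'a \<Rightarrow> 'b) \<Rightarrow> (nat \<Rightarrow> 'b \<Rightarrow> 'a) \<Rightarrow> (nat \<Rightarrow> 'a \<Rightarrow> 'a) \<Rightarrow> bool" where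
  "deformation_retract C d D e Psi Phi h \<longleftrightarrow>
     chain_map C d D e Psi \<and> chain_map D e C d Phi \<and>
     (\<forall>n. \<forall>y\<in>D n. Psi n (Phi n y) = y) \<and>
     (\<forall>n. lin_on (C n) (h n) \<and> (\<forall>x\<in>C n. h n x \<in> C (Suc n))) \<and>
     (\<forall>n. \<forall>x\<in>C n. d (Suc n) (h n x) + h (n - 1) (d n x) = x - Phi n (Psi n x))"

definition comps :: "'c set \<Rightarrow> ('c \<Rightarrow> 'a::real_vector set) \<Rightarrow> 'a \<Rightarrow> ('c \<Rightarrow> 'a) \<Rightarrow> bool" where
  "comps J S x c \<longleftrightarrow> (\<forall>\<alpha>\<in>J. c \<alpha> \<in> S \<alpha>) \<and> (\<forall>\<alpha>. \<alpha> \<notin> J \<longrightarrow> c \<alpha> = 0) \<and> x = (\<Sum>\<alpha>\<in>J. c \<alpha>)"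

definition direct_sum_decomp :: "'a::real_vector set \<Rightarrow> 'c set \<Rightarrow> ('c \<Rightarrow> 'a set) \<Rightarrow> bool" where
  "direct_sum_decomp A J S \<longleftrightarrow> finite J \<and> (\<forall>\<alpha>\<in>J. subspace (S \<alpha>) \<and> S \<alpha> \<subseteq> A) \<and>
     (\<forall>x\<in>A. \<exists>!c. comps J S x c)"

definition based_complex ::
  "(nat \<Rightarrow> 'a::real_vector set) \<Rightarrow> (nat \<Rightarrow> 'a \<Rightarrow> 'a) \<Rightarrow> (nat \<Rightarrow> 'c set) \<Rightarrow> ('c \<Rightarrow> 'a set) \<Rightarrow> bool" where
  "based_complex C d I S \<longleftrightarrow> chain_complex C d \<and> (\<forall>m n. m \<noteq> n \<longrightarrow> I m \<inter> I n = {}) \<and>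
     (\<forall>n. direct_sum_decomp (C n) (I n) S)"

definition deg :: "(nat \<Rightarrow> 'c set) \<Rightarrow> 'c \<Rightarrow> nat" where
  "deg I \<alpha> = (THE n. \<alpha> \<in> I n)"

definition proj :: "(nat \<Rightarrow> 'c set) \<Rightarrow> ('c \<Rightarrow> 'a::real_vector set) \<Rightarrow> 'c \<Rightarrow> 'a \<Rightarrow> 'a" where
  "proj I S \<beta> x = (THE c. comps (I (deg I \<beta>)) S x c) \<beta>"

definition bd :: "(nat \<Rightarrow> 'a \<Rightarrow> 'a) \<Rightarrow> (nat \<Rightarrow> 'c set) \<Rightarrow> ('c \<Rightarrow> 'a::real_vector set) \<Rightarrow> 'c \<Rightarrow> 'c \<Rightarrow> 'a \<Rightarrow> 'a" where
  "bd d I S \<beta> \<alpha> x = proj I S \<beta> (d (deg I \<alpha>) x)"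

definition edge :: "(nat \<Rightarrow> 'a \<Rightarrow> 'a) \<Rightarrow> (nat \<Rightarrow> 'c set) \<Rightarrow> ('c \<Rightarrow> 'a::real_vector set) \<Rightarrow> 'c \<Rightarrow> 'c \<Rightarrow> bool" where
  "edge d I S \<alpha> \<beta> \<longleftrightarrow> (\<exists>n. \<alpha> \<in> I (Suc n) \<and> \<beta> \<in> I n) \<and> (\<exists>x\<in>S \<alpha>. bd d I S \<beta> \<alpha> x \<noteq> 0)"

definition edgeM :: "(nat \<Rightarrow> 'a \<Rightarrow> 'a) \<Rightarrow> (nat \<Rightarrow> 'c set) \<Rightarrow> ('c \<Rightarrow> 'a::real_vector set) \<Rightarrow> ('c \<times> 'c) set \<Rightarrow> 'c \<Rightarrow> 'c \<Rightarrow> bool" where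
  "edgeM d I S M a b \<longleftrightarrow> (edge d I S a b \<and> (a, b) \<notin> M) \<or> (b, a) \<in> M"

definition pathsM :: "(nat \<Rightarrow> 'a \<Rightarrow> 'a) \<Rightarrow> (nat \<Rightarrow> 'c set) \<Rightarrow> ('c \<Rightarrow> 'a::real_vector set) \<Rightarrow> ('c \<times> 'c) set \<Rightarrow> 'c \<Rightarrow> 'c \<Rightarrow> 'c list set" where
  "pathsM d I S M a b = {xs. xs \<noteq> [] \<and> hd xs = a \<and> last xs = b \<and> successively (edgeM d I S M) xs}"

definition morse_matching :: "(nat \<Rightarrow> 'a \<Rightarrow> 'a) \<Rightarrow> (nat \<Rightarrow> 'c set) \<Rightarrow> ('c \<Rightarrow> 'a::real_vector set) \<Rightarrow> ('c \<times> 'c) set \<Rightarrow> bool" where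
  "morse_matching d I S M \<longleftrightarrow>
     (\<forall>(\<alpha>, \<beta>)\<in>M. edge d I S \<alpha> \<beta>) \<and>
     (\<forall>(\<alpha>, \<beta>)\<in>M. \<forall>(\<alpha>', \<beta>')\<in>M. (\<alpha> = \<alpha>' \<or> \<alpha> = \<beta>' \<or> \<beta> = \<alpha>' \<or> \<beta> = \<beta>') \<longrightarrow> (\<alpha>, \<beta>) = (\<alpha>', \<beta>')) \<and>
     (\<forall>(\<alpha>, \<beta>)\<in>M. bij_betw (bd d I S \<beta> \<alpha>) (S \<alpha>) (S \<beta>)) \<and>
     (\<forall>n. partial_order_on (I n) {(\<alpha>, \<beta>). \<alpha> \<in> I n \<and> \<beta> \<in> I n \<and> pathsM d I S M \<alpha> \<beta> \<noteq> {}})"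

definition critical :: "('c \<times> 'c) set \<Rightarrow> 'c \<Rightarrow> bool" where
  "critical M \<alpha> \<longleftrightarrow> \<alpha> \<notin> fst ` M \<and> \<alpha> \<notin> snd ` M"

definition stepM :: "(nat \<Rightarrow> 'a \<Rightarrow> 'a) \<Rightarrow> (nat \<Rightarrow> 'c set) \<Rightarrow> ('c \<Rightarrow> 'a::real_vector set) \<Rightarrow> ('c \<times> 'c) set \<Rightarrow> 'c \<Rightarrow> 'c \<Rightarrow> 'a \<Rightarrow> 'a" where
  "stepM d I S M a b x = (if (b, a) \<in> M then - inv_into (S b) (bd d I S a b) x else bd d I S b a x)"

fun pidx :: "('c \<Rightarrow> 'c \<Rightarrow> 'a \<Rightarrow> 'a) \<Rightarrow> 'c list \<Rightarrow> 'a \<Rightarrow> 'a" where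
  "pidx st [] = id"
| "pidx st [a] = id"
| "pidx st (a # b # xs) = pidx st (b # xs) \<circ> st a b"

definition Gamma :: "(nat \<Rightarrow> 'a \<Rightarrow> 'a) \<Rightarrow> (nat \<Rightarrow> 'c set) \<Rightarrow> ('c \<Rightarrow> 'a::real_vector set) \<Rightarrow> ('c \<times> 'c) set \<Rightarrow> 'c \<Rightarrow> 'c \<Rightarrow> 'a \<Rightarrow> 'a" where
  "Gamma d I S M \<beta> \<alpha> x = (\<Sum>\<gamma>\<in>pathsM d I S M \<alpha> \<beta>. pidx (stepM d I S M) \<gamma> x)"

text \<open>C^M_n realised as the (internal) direct sum of the critical summands of C_n\<close>
definition morse_carrier :: "(nat \<Rightarrow> 'c set) \<Rightarrow> ('c \<Rightarrow> 'a::real_vector set) \<Rightarrow> ('c \<times> 'c) set \<Rightarrow> nat \<Rightarrow> 'a set" where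
  "morse_carrier I S M n = span (\<Union>\<alpha>\<in>{\<alpha>\<in>I n. critical M \<alpha>}. S \<alpha>)"

definition morse_bd :: "(nat \<Rightarrow> 'a \<Rightarrow> 'a) \<Rightarrow> (nat \<Rightarrow> 'c set) \<Rightarrow> ('c \<Rightarrow> 'a::real_vector set) \<Rightarrow> ('c \<times> 'c) set \<Rightarrow> nat \<Rightarrow> 'a \<Rightarrow> 'a" where
  "morse_bd d I S M n x = (if n = 0 then 0 else
     (\<Sum>\<alpha>\<in>{\<alpha>\<in>I n. critical M \<alpha>}. \<Sum>\<beta>\<in>{\<beta>\<in>I (n - 1). critical M \<beta>}. Gamma d I S M \<beta> \<alpha> (proj I S \<alpha> x)))"

definition morse_Phi :: "(nat \<Rightarrow> 'a \<Rightarrow> 'a) \<Rightarrow> (nat \<Rightarrow> 'c set) \<Rightarrow> ('c \<Rightarrow> 'a::real_vector set) \<Rightarrow> ('c \<times> 'c) set \<Rightarrow> nat \<Rightarrow> 'a \<Rightarrow> 'a" where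
  "morse_Phi d I S M n x =
     (\<Sum>\<alpha>\<in>{\<alpha>\<in>I n. critical M \<alpha>}. \<Sum>\<beta>\<in>I n. Gamma d I S M \<beta> \<alpha> (proj I S \<alpha> x))"

definition morse_Psi :: "(nat \<Rightarrow> 'a \<Rightarrow> 'a) \<Rightarrow> (nat \<Rightarrow> 'c set) \<Rightarrow> ('c \<Rightarrow> 'a::real_vector set) \<Rightarrow> ('c \<times> 'c) set \<Rightarrow> nat \<Rightarrow> 'a \<Rightarrow> 'a" where
  "morse_Psi d I S M n x =
     (\<Sum>\<alpha>\<in>I n. \<Sum>\<beta>\<in>{\<beta>\<in>I n. critical M \<beta>}. Gamma d I S M \<beta> \<alpha> (proj I S \<alpha> x))"

end

theory Submission
  imports Defs
begin

lemma lin_on_add: "lin_on A f \<Longrightarrow> x \<in> A \<Longrightarrow> y \<in> A \<Longrightarrow> f (x + y) = f x + f y"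
  by (simp add: lin_on_def)

lemma lin_on_scale: "lin_on A f \<Longrightarrow> x \<in> A \<Longrightarrow> f (c *\<^sub>R x) = c *\<^sub>R f x"
  by (simp add: lin_on_def)

lemma lin_on_zero: "lin_on A f \<Longrightarrow> subspace A \<Longrightarrow> f 0 = 0"
  using lin_on_scale[of A f 0 0] real_vector.subspace_0[of A] by simp

lemma lin_on_diff:
  assumes a: "lin_on A f" "subspace A" "x \<in> A" "y \<in> A"
  shows "f (x - y) = f x - f y"
proof -
  have "(-1::real) *\<^sub>R y \<in> A" using a subspace_mul by blast
  then have "f (x + (-1::real) *\<^sub>R y) = f x + (-1::real) *\<^sub>R f y"
    using a lin_on_add lin_on_scale by metis
  then show ?thesis by simp
qed

lemma lin_on_subset: "lin_on A f \<Longrightarrow> B \<subseteq> A \<Longrightarrow> lin_on B f"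
  unfolding lin_on_def by blast

lemma lin_on_image_subspace:
  assumes "lin_on A f" "subspace A" shows "subspace (f ` A)"
  unfolding real_vector.subspace_def
proof (intro conjI ballI allI)
  show "0 \<in> f ` A" using lin_on_zero[OF assms] real_vector.subspace_0[OF assms(2)] by (metis image_eqI)
next
  fix x y assume "x \<in> f ` A" "y \<in> f ` A"
  then obtain a b where ab: "a \<in> A" "b \<in> A" "x = f a" "y = f b" by blast
  then have "f (a + b) = x + y" using assms lin_on_add by metis
  moreover have "a + b \<in> A" using ab assms real_vector.subspace_add by blast
  ultimately show "x + y \<in> f ` A" by (metis image_eqI)
next
  fix c x assume "x \<in> f ` A"
  then obtain a where a: "a \<in> A" "x = f a" by blast
  then have "f (c *\<^sub>R a) = c *\<^sub>R x" using assms lin_on_scale by metis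
  moreover have "c *\<^sub>R a \<in> A" using a assms subspace_mul by blast
  ultimately show "c *\<^sub>R x \<in> f ` A" by (metis image_eqI)
qed

lemma ar[simp]:
  fixes n :: nat
  shows "(3*n) div 3 = n" "(3*n+1) div 3 = n" "(3*n+2) div 3 = n" "(3*n+3) div 3 = Suc n"
    "(3*n+5) div 3 = Suc n" "(3*n) mod 3 = 0" "(3*n+1) mod 3 = 1" "(3*n+2) mod 3 = 2"
    "(3*n+3) mod 3 = 0" "(3*n+5) mod 3 = 2"
    "Suc (3*n) div 3 = n" "Suc (Suc (3*n)) div 3 = n" "Suc (3*n) mod 3 = 1" "Suc (Suc (3*n)) mod 3 = 2"
  by presburger+

lemma sum2_delta:
  assumes "finite A" "finite B" "a \<in> A" "b \<in> B"
  shows "(\<Sum>\<alpha>\<in>A. \<Sum>\<beta>\<in>B. if \<alpha> = a \<and> \<beta> = b then v else 0) = v"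
proof -
  have "\<And>\<alpha>. (\<Sum>\<beta>\<in>B. if \<alpha> = a \<and> \<beta> = b then v else 0) = (if \<alpha> = a then v else 0)"
  proof -
    fix \<alpha>
    have "(\<Sum>\<beta>\<in>B. if \<alpha> = a \<and> \<beta> = b then v else 0) = (\<Sum>\<beta>\<in>B. if \<beta> = b then (if \<alpha> = a then v else 0) else 0)"
      by (rule sum.cong) auto
    also have "\<dots> = (if \<alpha> = a then v else 0)" using assms by (simp add: sum.delta)
    finally show "(\<Sum>\<beta>\<in>B. if \<alpha> = a \<and> \<beta> = b then v else 0) = (if \<alpha> = a then v else 0)" .
  qed
  then show ?thesis using assms by (simp add: sum.delta)
qed

locale dr =
  fixes C :: "nat \<Rightarrow> 'v::real_vector set" and d :: "nat \<Rightarrow> 'v \<Rightarrow> 'v"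
    and D :: "nat \<Rightarrow> 'w::real_vector set" and e :: "nat \<Rightarrow> 'w \<Rightarrow> 'w"
    and Psi :: "nat \<Rightarrow> 'v \<Rightarrow> 'w" and Phi :: "nat \<Rightarrow> 'w \<Rightarrow> 'v" and h :: "nat \<Rightarrow> 'v \<Rightarrow> 'v"
  assumes cc: "chain_complex C d" and cd: "chain_complex D e"
    and dfr: "deformation_retract C d D e Psi Phi h"
begin

lemma Csub: "subspace (C n)" using cc unfolding chain_complex_def fin_dim_subspace_def by blast
lemma Dsub: "subspace (D n)" using cd unfolding chain_complex_def fin_dim_subspace_def by blast
lemma dlin: "lin_on (C n) (d n)" using cc unfolding chain_complex_def by blast
lemma din: "x \<in> C n \<Longrightarrow> d n x \<in> C (n - 1)" using cc unfolding chain_complex_def by blast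
lemma d0: "x \<in> C 0 \<Longrightarrow> d 0 x = 0" using cc unfolding chain_complex_def by blast
lemma dd: "x \<in> C (Suc n) \<Longrightarrow> d n (d (Suc n) x) = 0" using cc unfolding chain_complex_def by blast
lemma elin: "lin_on (D n) (e n)" using cd unfolding chain_complex_def by blast
lemma ein: "y \<in> D n \<Longrightarrow> e n y \<in> D (n - 1)" using cd unfolding chain_complex_def by blast
lemma e0: "y \<in> D 0 \<Longrightarrow> e 0 y = 0" using cd unfolding chain_complex_def by blast
lemma Psilin: "lin_on (C n) (Psi n)" using dfr unfolding deformation_retract_def chain_map_def by blast
lemma Psiin: "x \<in> C n \<Longrightarrow> Psi n x \<in> D n" using dfr unfolding deformation_retract_def chain_map_def by blast
lemma Psich: "x \<in> C n \<Longrightarrow> e n (Psi n x) = Psi (n - 1) (d n x)"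
  using dfr unfolding deformation_retract_def chain_map_def by blast
lemma Philin: "lin_on (D n) (Phi n)" using dfr unfolding deformation_retract_def chain_map_def by blast
lemma Phiin: "y \<in> D n \<Longrightarrow> Phi n y \<in> C n" using dfr unfolding deformation_retract_def chain_map_def by blast
lemma Phich: "y \<in> D n \<Longrightarrow> d n (Phi n y) = Phi (n - 1) (e n y)"
  using dfr unfolding deformation_retract_def chain_map_def by blast
lemma PsiPhi: "y \<in> D n \<Longrightarrow> Psi n (Phi n y) = y" using dfr unfolding deformation_retract_def by blast
lemma hlin: "lin_on (C n) (h n)" using dfr unfolding deformation_retract_def by blast
lemma hin: "x \<in> C n \<Longrightarrow> h n x \<in> C (Suc n)" using dfr unfolding deformation_retract_def by blast
lemma htp: "x \<in> C n \<Longrightarrow> d (Suc n) (h n x) + h (n - 1) (d n x) = x - Phi n (Psi n x)"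
  using dfr unfolding deformation_retract_def by blast

lemma d_0[simp]: "d n 0 = 0" using lin_on_zero[OF dlin Csub] .
lemma e_0[simp]: "e n 0 = 0" using lin_on_zero[OF elin Dsub] .
lemma Psi_0[simp]: "Psi n 0 = 0" using lin_on_zero[OF Psilin Csub] .
lemma Phi_0[simp]: "Phi n 0 = 0" using lin_on_zero[OF Philin Dsub] .
lemma h_0[simp]: "h n 0 = 0" using lin_on_zero[OF hlin Csub] .
lemma C0[simp]: "0 \<in> C n" using real_vector.subspace_0[OF Csub] .

definition s :: "nat \<Rightarrow> 'v \<Rightarrow> 'v" where
  "s n x = h n x - Phi (Suc n) (Psi (Suc n) (h n x))"
definition A :: "nat \<Rightarrow> 'v set" where "A n = Phi n ` D n"
definition Z :: "nat \<Rightarrow> 'v set" where "Z n = {x \<in> C n. Psi n x = 0 \<and> d n x = 0}"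
definition W :: "nat \<Rightarrow> 'v set" where "W n = (if n = 0 then {0} else s (n - 1) ` Z (n - 1))"
definition Sc :: "nat \<Rightarrow> 'v set" where
  "Sc c = (if c mod 3 = 0 then A (c div 3) else if c mod 3 = 1 then Z (c div 3) else W (c div 3))"
definition I :: "nat \<Rightarrow> nat set" where "I n = {3*n, 3*n+1, 3*n+2}"
definition M :: "(nat \<times> nat) set" where "M = {(3*n+5, 3*n+1) | n. W (Suc n) \<noteq> {0}}"
definition canon :: "nat \<Rightarrow> 'v \<Rightarrow> nat \<Rightarrow> 'v" where
  "canon n x c = (if c = 3*n then Phi n (Psi n x)
     else if c = 3*n+1 then d (Suc n) (s n (x - Phi n (Psi n x)))
     else if c = 3*n+2 then s (n - 1) (d n (x - Phi n (Psi n x))) else 0)"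

lemma Sc_simps[simp]: "Sc (3*n) = A n" "Sc (3*n+1) = Z n" "Sc (3*n+2) = W n"
  "Sc (3*n+3) = A (Suc n)" "Sc (3*n+5) = W (Suc n)"
  "Sc (Suc (3*n)) = Z n" "Sc (Suc (Suc (3*n))) = W n"
  by (simp_all add: Sc_def)

lemma I_iff: "\<alpha> \<in> I n \<longleftrightarrow> \<alpha> div 3 = n"
  unfolding I_def by auto

lemma finI[simp]: "finite (I n)" by (simp add: I_def)

lemma mod3: "(\<alpha>::nat) mod 3 = 0 \<or> \<alpha> mod 3 = 1 \<or> \<alpha> mod 3 = 2" by presburger

lemma dm3: "(a::nat) = 3 * (a div 3) + a mod 3" by simp

lemma sC: "x \<in> C n \<Longrightarrow> s n x \<in> C (Suc n)"
  unfolding s_def using hin Psiin Phiin real_vector.subspace_diff[OF Csub] by metis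

lemma slin: "lin_on (C n) (s n)"
  unfolding lin_on_def
proof (intro conjI ballI allI)
  fix x y assume x: "x \<in> C n" and y: "y \<in> C n"
  have hx: "h n x \<in> C (Suc n)" "h n y \<in> C (Suc n)" using hin x y by auto
  have "s n (x + y) = (h n x + h n y) - Phi (Suc n) (Psi (Suc n) (h n x) + Psi (Suc n) (h n y))"
    unfolding s_def using lin_on_add[OF hlin x y] lin_on_add[OF Psilin hx] by simp
  also have "\<dots> = s n x + s n y"
    unfolding s_def using lin_on_add[OF Philin Psiin[OF hx(1)] Psiin[OF hx(2)]] by (simp add: algebra_simps)
  finally show "s n (x + y) = s n x + s n y" .
next
  fix c x assume x: "x \<in> C n"
  have hx: "h n x \<in> C (Suc n)" using hin x by auto
  show "s n (c *\<^sub>R x) = c *\<^sub>R s n x"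
    unfolding s_def using lin_on_scale[OF hlin x] lin_on_scale[OF Psilin hx] lin_on_scale[OF Philin Psiin[OF hx]]
    by (simp add: scaleR_diff_right)
qed

lemma s_0[simp]: "s n 0 = 0" by (simp add: s_def)

lemma Psis: "x \<in> C n \<Longrightarrow> Psi (Suc n) (s n x) = 0"
proof -
  assume x: "x \<in> C n"
  have hx: "h n x \<in> C (Suc n)" using hin x by auto
  show ?thesis unfolding s_def
    using lin_on_diff[OF Psilin Csub hx Phiin[OF Psiin[OF hx]]] PsiPhi[OF Psiin[OF hx]] by simp
qed

lemma ds: "x \<in> C n \<Longrightarrow> d (Suc n) (s n x) = d (Suc n) (h n x) - Phi n (Psi n (d (Suc n) (h n x)))"
proof -
  assume x: "x \<in> C n"
  have hx: "h n x \<in> C (Suc n)" using hin x by auto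
  have "d (Suc n) (s n x) = d (Suc n) (h n x) - d (Suc n) (Phi (Suc n) (Psi (Suc n) (h n x)))"
    unfolding s_def using lin_on_diff[OF dlin Csub hx Phiin[OF Psiin[OF hx]]] .
  also have "\<dots> = d (Suc n) (h n x) - Phi n (Psi n (d (Suc n) (h n x)))"
    using Phich[OF Psiin[OF hx]] Psich[OF hx] by simp
  finally show ?thesis .
qed

lemma sd: "x \<in> C n \<Longrightarrow> s (n - 1) (d n x) = h (n - 1) (d n x) - Phi n (Psi n (h (n - 1) (d n x)))"
proof (cases n)
  case 0
  assume "x \<in> C n" then show ?thesis using 0 d0 by simp
next
  case (Suc m)
  then show ?thesis by (simp add: s_def)
qed

lemma hdC: "x \<in> C n \<Longrightarrow> h (n - 1) (d n x) \<in> C n"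
proof (cases n)
  case 0
  assume "x \<in> C n" then show ?thesis using 0 d0 by simp
next
  case (Suc m)
  assume "x \<in> C n" then show ?thesis using Suc din hin by fastforce
qed

lemma ID: "x \<in> C n \<Longrightarrow> d (Suc n) (s n x) + s (n - 1) (d n x) = x - Phi n (Psi n x)"
proof -
  assume x: "x \<in> C n"
  define p where "p = d (Suc n) (h n x)"
  define q where "q = h (n - 1) (d n x)"
  have pC: "p \<in> C n" unfolding p_def using din[OF hin[OF x]] by simp
  have qC: "q \<in> C n" unfolding q_def using hdC[OF x] .
  have pq: "p + q = x - Phi n (Psi n x)" unfolding p_def q_def using htp[OF x] .
  have PsiC: "Psi n x \<in> D n" using Psiin x .
  have t: "Psi n (p + q) = 0"
    using pq lin_on_diff[OF Psilin Csub x Phiin[OF PsiC]] PsiPhi[OF PsiC] by simp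
  have "d (Suc n) (s n x) + s (n - 1) (d n x) = (p - Phi n (Psi n p)) + (q - Phi n (Psi n q))"
    using ds[OF x] sd[OF x] unfolding p_def q_def by simp
  also have "\<dots> = (p + q) - Phi n (Psi n (p + q))"
    using lin_on_add[OF Psilin pC qC] lin_on_add[OF Philin Psiin[OF pC] Psiin[OF qC]]
    by (simp add: algebra_simps)
  also have "\<dots> = x - Phi n (Psi n x)" using t pq by simp
  finally show ?thesis .
qed

lemma KC: "x \<in> C n \<Longrightarrow> x - Phi n (Psi n x) \<in> C n"
  using real_vector.subspace_diff[OF Csub] Phiin Psiin by metis

lemma PsiK: "x \<in> C n \<Longrightarrow> Psi n (x - Phi n (Psi n x)) = 0"
  using lin_on_diff[OF Psilin Csub _ Phiin[OF Psiin]] PsiPhi[OF Psiin] by simp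

lemma IDK: "x \<in> C n \<Longrightarrow> Psi n x = 0 \<Longrightarrow> d (Suc n) (s n x) + s (n - 1) (d n x) = x"
  using ID by simp

lemma dsZ: "z \<in> Z n \<Longrightarrow> d (Suc n) (s n z) = z"
  using IDK[of z n] unfolding Z_def by simp

lemma A_sub: "subspace (A n)" unfolding A_def using lin_on_image_subspace[OF Philin Dsub] .

lemma Z_sub: "subspace (Z n)"
  unfolding real_vector.subspace_def
proof (intro conjI ballI allI)
  show "0 \<in> Z n" by (simp add: Z_def)
next
  fix x y assume "x \<in> Z n" "y \<in> Z n"
  then have xy: "x \<in> C n" "y \<in> C n" "Psi n x = 0" "Psi n y = 0" "d n x = 0" "d n y = 0" by (auto simp: Z_def)
  then show "x + y \<in> Z n" unfolding Z_def
    using lin_on_add[OF Psilin xy(1,2)] lin_on_add[OF dlin xy(1,2)] real_vector.subspace_add[OF Csub xy(1,2)] by simp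
next
  fix c x assume "x \<in> Z n"
  then have xy: "x \<in> C n" "Psi n x = 0" "d n x = 0" by (auto simp: Z_def)
  then show "c *\<^sub>R x \<in> Z n" unfolding Z_def
    using lin_on_scale[OF Psilin xy(1)] lin_on_scale[OF dlin xy(1)] subspace_mul[OF Csub xy(1)] by simp
qed

lemma Z_C: "Z n \<subseteq> C n" by (auto simp: Z_def)

lemma W_sub: "subspace (W n)"
proof (cases n)
  case 0 then show ?thesis by (simp add: W_def real_vector.subspace_single_0)
next
  case (Suc m)
  have "subspace (s m ` Z m)" using lin_on_image_subspace[OF lin_on_subset[OF slin Z_C] Z_sub] .
  then show ?thesis using Suc by (simp add: W_def)
qed

lemma W_C: "W n \<subseteq> C n"
proof (cases n)
  case 0 then show ?thesis by (simp add: W_def)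
next
  case (Suc m)
  then show ?thesis using sC Z_C by (auto simp: W_def)
qed

lemma A_C: "A n \<subseteq> C n" using Phiin by (auto simp: A_def)

lemma Sc_sub: "subspace (Sc \<alpha>)"
  unfolding Sc_def using A_sub Z_sub W_sub by simp

lemma Sc_C: "\<alpha> \<in> I n \<Longrightarrow> Sc \<alpha> \<subseteq> C n"
  unfolding Sc_def I_iff using A_C Z_C W_C by auto

lemma sumI: "(\<Sum>\<alpha>\<in>I n. f \<alpha>) = f (3*n) + f (3*n+1) + f (3*n+2)"
  by (simp add: I_def add.assoc)

lemma comps_canon: assumes x: "x \<in> C n" shows "comps (I n) Sc x (canon n x)"
proof -
  define k where "k = x - Phi n (Psi n x)"
  have kC: "k \<in> C n" and kPsi: "Psi n k = 0" using KC[OF x] PsiK[OF x] k_def by auto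
  have c1: "canon n x (3*n) = Phi n (Psi n x)" by (simp add: canon_def)
  have c2: "canon n x (3*n+1) = d (Suc n) (s n k)" by (simp add: canon_def k_def)
  have c3: "canon n x (3*n+2) = s (n - 1) (d n k)" by (simp add: canon_def k_def)
  have m1: "canon n x (3*n) \<in> Sc (3*n)" using Psiin[OF x] c1 by (simp add: A_def)
  have m2: "canon n x (3*n+1) \<in> Sc (3*n+1)"
  proof -
    have sk: "s n k \<in> C (Suc n)" using sC[OF kC] .
    have "d (Suc n) (s n k) \<in> C n" using din[OF sk] by simp
    moreover have "Psi n (d (Suc n) (s n k)) = 0" using Psich[OF sk] Psis[OF kC] by simp
    moreover have "d n (d (Suc n) (s n k)) = 0" using dd[OF sk] .
    ultimately show ?thesis using c2 by (simp add: Z_def)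
  qed
  have m3: "canon n x (3*n+2) \<in> Sc (3*n+2)"
  proof (cases n)
    case 0
    have "d 0 k = 0" using d0 kC 0 by simp
    then show ?thesis using c3 0 by (simp add: W_def Sc_def)
  next
    case (Suc m)
    have kC': "k \<in> C (Suc m)" using kC Suc by simp
    have "d (Suc m) k \<in> C m" using din[OF kC'] by simp
    moreover have "Psi m (d (Suc m) k) = 0" using Psich[OF kC'] kPsi Suc by simp
    moreover have "d m (d (Suc m) k) = 0" using dd[OF kC'] .
    ultimately have "d (Suc m) k \<in> Z m" by (simp add: Z_def)
    then have "s (n - 1) (d n k) \<in> W n" using Suc by (simp add: W_def)
    then show ?thesis unfolding Sc_simps(3) c3 .
  qed
  have sum: "(\<Sum>\<alpha>\<in>I n. canon n x \<alpha>) = x"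
    unfolding sumI c1 c2 c3 using IDK[OF kC kPsi] k_def by (simp add: add.assoc)
  have out: "\<forall>\<alpha>. \<alpha> \<notin> I n \<longrightarrow> canon n x \<alpha> = 0" by (simp add: canon_def I_def)
  have "\<forall>\<alpha>\<in>I n. canon n x \<alpha> \<in> Sc \<alpha>" using m1 m2 m3 by (simp add: I_def)
  then show ?thesis unfolding comps_def using sum out by simp
qed

lemma comps_unique: assumes x: "x \<in> C n" and c: "comps (I n) Sc x c" shows "c = canon n x"
proof -
  define a z w where "a = c (3*n)" and "z = c (3*n+1)" and "w = c (3*n+2)"
  have aA: "a \<in> A n" and zZ: "z \<in> Z n" and wW: "w \<in> W n"
    using c unfolding comps_def a_def z_def w_def by (auto simp: I_def)
  have out: "\<And>\<alpha>. \<alpha> \<notin> I n \<Longrightarrow> c \<alpha> = 0" using c unfolding comps_def by auto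
  have xs: "x = a + z + w" using c unfolding comps_def a_def z_def w_def sumI by simp
  obtain y where y: "y \<in> D n" "a = Phi n y" using aA unfolding A_def by auto
  have aC: "a \<in> C n" using y Phiin by auto
  have zC: "z \<in> C n" "Psi n z = 0" "d n z = 0" using zZ unfolding Z_def by auto
  have wC: "w \<in> C n" using wW W_C by auto
  have wPsi: "Psi n w = 0"
  proof (cases n)
    case 0 then show ?thesis using wW by (simp add: W_def)
  next
    case (Suc m)
    then obtain z' where "z' \<in> Z m" "w = s m z'" using wW by (auto simp: W_def)
    then show ?thesis using Psis Z_C Suc by auto
  qed
  have azC: "a + z \<in> C n" using real_vector.subspace_add[OF Csub aC zC(1)] .
  have "Psi n x = Psi n a + Psi n z + Psi n w"
    using xs lin_on_add[OF Psilin azC wC] lin_on_add[OF Psilin aC zC(1)] by simp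
  then have "Psi n x = y" using y PsiPhi zC wPsi by simp
  then have PP: "Phi n (Psi n x) = a" using y by simp
  define k where "k = x - Phi n (Psi n x)"
  have kzw: "k = z + w" using xs PP k_def by simp
  have kC: "k \<in> C n" "Psi n k = 0" using KC[OF x] PsiK[OF x] k_def by auto
  have wpart: "s (n - 1) (d n k) = w"
  proof (cases n)
    case 0
    then have "w = 0" using wW by (simp add: W_def)
    moreover have "d 0 k = 0" using d0 kC 0 by simp
    ultimately show ?thesis using 0 by simp
  next
    case (Suc m)
    then obtain z' where z': "z' \<in> Z m" "w = s m z'" using wW by (auto simp: W_def)
    have "d n k = d n z + d n w" using kzw lin_on_add[OF dlin zC(1) wC] by simp
    also have "\<dots> = z'" using zC z' dsZ Suc by simp
    finally show ?thesis using z' Suc by simp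
  qed
  have "d (Suc n) (s n k) + w = z + w" using IDK[OF kC] wpart kzw by simp
  then have zpart: "d (Suc n) (s n k) = z" by simp
  show ?thesis
  proof
    fix \<alpha>
    show "c \<alpha> = canon n x \<alpha>"
    proof (cases "\<alpha> \<in> I n")
      case True
      then have "\<alpha> = 3*n \<or> \<alpha> = 3*n+1 \<or> \<alpha> = 3*n+2" by (simp add: I_def)
      then show ?thesis using PP zpart wpart a_def z_def w_def k_def by (auto simp: canon_def)
    next
      case False
      then show ?thesis using out by (simp add: canon_def I_def)
    qed
  qed
qed

lemma dsd: "direct_sum_decomp (C n) (I n) Sc"
proof -
  have 1: "\<forall>\<alpha>\<in>I n. subspace (Sc \<alpha>) \<and> Sc \<alpha> \<subseteq> C n" using Sc_sub Sc_C by blast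
  have 2: "\<forall>x\<in>C n. \<exists>!c. comps (I n) Sc x c" using comps_canon comps_unique by blast
  show ?thesis unfolding direct_sum_decomp_def using 1 2 by simp
qed

lemma deg_I: "deg I \<alpha> = \<alpha> div 3"
  unfolding deg_def I_iff by simp

lemma proj_canon: "x \<in> C n \<Longrightarrow> \<alpha> \<in> I n \<Longrightarrow> proj I Sc \<alpha> x = canon n x \<alpha>"
proof -
  assume x: "x \<in> C n" and a: "\<alpha> \<in> I n"
  have "deg I \<alpha> = n" using a by (simp add: deg_I I_iff)
  moreover have "(THE c. comps (I n) Sc x c) = canon n x"
    using comps_canon[OF x] comps_unique[OF x] by (rule the_equality)
  ultimately show ?thesis unfolding proj_def by simp
qed

lemma proj_in: "x \<in> C n \<Longrightarrow> \<alpha> \<in> I n \<Longrightarrow> proj I Sc \<alpha> x \<in> Sc \<alpha>"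
  using proj_canon comps_canon unfolding comps_def by metis

lemma proj_self: assumes y: "y \<in> Sc \<alpha>" and a: "\<alpha> \<in> I n" and b: "\<beta> \<in> I n"
  shows "proj I Sc \<beta> y = (if \<beta> = \<alpha> then y else 0)"
proof -
  have yC: "y \<in> C n" using Sc_C[OF a] y by auto
  have "comps (I n) Sc y (\<lambda>\<gamma>. if \<gamma> = \<alpha> then y else 0)"
    unfolding comps_def using y a real_vector.subspace_0[OF Sc_sub] by (auto simp: sum.delta)
  then have "canon n y = (\<lambda>\<gamma>. if \<gamma> = \<alpha> then y else 0)" using comps_unique[OF yC] by simp
  then show ?thesis using proj_canon[OF yC b] by simp
qed

lemma based: "based_complex C d I Sc"
  unfolding based_complex_def using cc dsd by (auto simp: I_iff)

lemma M_props: "(p, q) \<in> M \<Longrightarrow> p mod 3 = 2 \<and> q mod 3 = 1 \<and> p = q + 4"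
  unfolding M_def by auto

lemma M_intro: "W (Suc n) \<noteq> {0} \<Longrightarrow> (3*n+5, 3*n+1) \<in> M"
  unfolding M_def by blast

lemma crit_A: "critical M (3*n)"
proof -
  have "\<forall>p\<in>M. fst p \<noteq> 3*n \<and> snd p \<noteq> 3*n"
  proof
    fix p assume "p \<in> M"
    then have "fst p mod 3 = 2" "snd p mod 3 = 1" using M_props[of "fst p" "snd p"] by auto
    then show "fst p \<noteq> 3*n \<and> snd p \<noteq> 3*n" by auto
  qed
  then show ?thesis unfolding critical_def by force
qed

lemma bd_eq: "bd d I Sc \<beta> \<alpha> x = proj I Sc \<beta> (d (\<alpha> div 3) x)"
  unfolding bd_def deg_I ..

lemma notM: "p mod 3 \<noteq> 2 \<Longrightarrow> (p, q) \<notin> M"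
  using M_props by blast

lemma edge_cases: assumes "edge d I Sc a b"
  shows "(a mod 3 = 0 \<and> a \<ge> 3 \<and> b = a - 3) \<or> (a, b) \<in> M"
proof -
  obtain m x where am: "a div 3 = Suc m" and bm: "b div 3 = m" and x: "x \<in> Sc a"
    and nz: "proj I Sc b (d (Suc m) x) \<noteq> 0"
    using assms unfolding edge_def bd_eq I_iff by auto
  have bI: "b \<in> I m" using bm I_iff by simp
  have m3: "3*m \<in> I m" "3*m+1 \<in> I m" by (simp_all add: I_iff)
  from mod3[of a] show ?thesis
  proof (elim disjE)
    assume a0: "a mod 3 = 0"
    then have "x \<in> A (Suc m)" using x am by (simp add: Sc_def)
    then obtain y where y: "y \<in> D (Suc m)" "x = Phi (Suc m) y" unfolding A_def by auto
    have dx: "d (Suc m) x = Phi m (e (Suc m) y)" using Phich[OF y(1)] y(2) by simp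
    have "e (Suc m) y \<in> D m" using ein[OF y(1)] by simp
    then have "d (Suc m) x \<in> Sc (3*m)" using dx by (simp add: A_def)
    then have "proj I Sc b (d (Suc m) x) = (if b = 3*m then d (Suc m) x else 0)"
      using proj_self[of "d (Suc m) x" "3*m" m b] bI m3 by simp
    with nz have "b = 3*m" by (auto split: if_splits)
    moreover have "a = 3*m+3" using a0 am by presburger
    ultimately show ?thesis by simp
  next
    assume a1: "a mod 3 = 1"
    then have "x \<in> Z (Suc m)" using x am by (simp add: Sc_def)
    then have "d (Suc m) x = 0" by (simp add: Z_def)
    moreover have "0 \<in> Sc (3*m)" using real_vector.subspace_0[OF Sc_sub] .
    then have "proj I Sc b 0 = 0" using proj_self[of 0 "3*m" m b] bI m3 by simp
    ultimately show ?thesis using nz by simp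
  next
    assume a2: "a mod 3 = 2"
    then have xW: "x \<in> W (Suc m)" using x am by (simp add: Sc_def)
    then obtain z where z: "z \<in> Z m" "x = s m z" by (auto simp: W_def)
    have dx: "d (Suc m) x = z" using dsZ z by simp
    have "z \<in> Sc (3*m+1)" using z by simp
    then have "proj I Sc b z = (if b = 3*m+1 then z else 0)"
      using proj_self[of z "3*m+1" m b] bI m3 by simp
    with nz dx have b1: "b = 3*m+1" and zn: "z \<noteq> 0" by (auto split: if_splits)
    have "x \<noteq> 0" using dx zn by auto
    then have "W (Suc m) \<noteq> {0}" using xW by auto
    then have "(3*m+5, 3*m+1) \<in> M" by (rule M_intro)
    moreover have "a = 3*m+5" using a2 am by presburger
    ultimately show ?thesis using b1 by simp
  qed
qed

lemma edgeM_cases: "edgeM d I Sc M a b \<Longrightarrow> (a mod 3 = 0 \<and> a \<ge> 3 \<and> b = a - 3) \<or> (b, a) \<in> M"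
  unfolding edgeM_def using edge_cases by blast

lemma path_L: "successively (edgeM d I Sc M) (a # xs) \<Longrightarrow> xs \<noteq> [] \<Longrightarrow>
   (a mod 3 = 0 \<and> last xs mod 3 = 0 \<and> last xs < a) \<or> (last xs, a) \<in> M"
proof (induction xs arbitrary: a)
  case Nil then show ?case by simp
next
  case (Cons b ys)
  have ab: "edgeM d I Sc M a b" and sb: "successively (edgeM d I Sc M) (b # ys)"
    using Cons.prems(1) by auto
  show ?case
  proof (cases "ys = []")
    case True
    from edgeM_cases[OF ab] show ?thesis
    proof
      assume H: "a mod 3 = 0 \<and> 3 \<le> a \<and> b = a - 3"
      then have "b mod 3 = 0" "b < a" by presburger+
      then show ?thesis using True H by simp
    next
      assume "(b, a) \<in> M" then show ?thesis using True by simp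
    qed
  next
    case False
    have IH: "(b mod 3 = 0 \<and> last ys mod 3 = 0 \<and> last ys < b) \<or> (last ys, b) \<in> M"
      using Cons.IH[OF sb False] .
    have lst: "last (b # ys) = last ys" using False by simp
    from edgeM_cases[OF ab] show ?thesis
    proof
      assume H: "a mod 3 = 0 \<and> 3 \<le> a \<and> b = a - 3"
      then have b0: "b mod 3 = 0" "b < a" by presburger+
      then have "(last ys, b) \<notin> M" using M_props by force
      with IH b0 H show ?thesis using lst by auto
    next
      assume H: "(b, a) \<in> M"
      then have "b mod 3 = 2" using M_props by blast
      with IH have False using M_props by force
      then show ?thesis ..
    qed
  qed
qed

lemma path_same: assumes p: "p \<in> pathsM d I Sc M \<alpha> \<beta>" and dg: "\<alpha> div 3 = \<beta> div 3"
  shows "p = [\<alpha>]"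
proof -
  from p have ne: "p \<noteq> []" and hd: "hd p = \<alpha>" and lst: "last p = \<beta>"
    and sc: "successively (edgeM d I Sc M) p" unfolding pathsM_def by auto
  obtain xs where pxs: "p = \<alpha> # xs" using ne hd by (cases p) auto
  show ?thesis
  proof (cases "xs = []")
    case True then show ?thesis using pxs by simp
  next
    case False
    have lx: "last xs = \<beta>" using lst pxs False by simp
    from path_L[of \<alpha> xs] sc pxs False lx
    have "(\<alpha> mod 3 = 0 \<and> \<beta> mod 3 = 0 \<and> \<beta> < \<alpha>) \<or> (\<beta>, \<alpha>) \<in> M" by simp
    then have False
    proof
      assume "\<alpha> mod 3 = 0 \<and> \<beta> mod 3 = 0 \<and> \<beta> < \<alpha>" with dg show False
        using dm3[of \<alpha>] dm3[of \<beta>] by linarith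
    next
      assume "(\<beta>, \<alpha>) \<in> M" then have "\<beta> = \<alpha> + 4" using M_props by blast
      with dg show False using dm3[of \<alpha>] dm3[of \<beta>] mod_less_divisor[of 3 \<alpha>] mod_less_divisor[of 3 \<beta>] by linarith
    qed
    then show ?thesis ..
  qed
qed

lemma pathsM_same: assumes dg: "\<alpha> div 3 = \<beta> div 3"
  shows "pathsM d I Sc M \<alpha> \<beta> = (if \<alpha> = \<beta> then {[\<alpha>]} else {})"
proof (rule set_eqI)
  fix p
  show "p \<in> pathsM d I Sc M \<alpha> \<beta> \<longleftrightarrow> p \<in> (if \<alpha> = \<beta> then {[\<alpha>]} else {})"
  proof
    assume H: "p \<in> pathsM d I Sc M \<alpha> \<beta>"
    then have "p = [\<alpha>]" using path_same dg by blast
    moreover have "last p = \<beta>" using H unfolding pathsM_def by auto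
    ultimately show "p \<in> (if \<alpha> = \<beta> then {[\<alpha>]} else {})" by auto
  next
    assume "p \<in> (if \<alpha> = \<beta> then {[\<alpha>]} else {})"
    then show "p \<in> pathsM d I Sc M \<alpha> \<beta>" by (auto split: if_splits simp: pathsM_def)
  qed
qed

lemma Gamma_same: "\<alpha> div 3 = \<beta> div 3 \<Longrightarrow> Gamma d I Sc M \<beta> \<alpha> y = (if \<alpha> = \<beta> then y else 0)"
  unfolding Gamma_def by (simp add: pathsM_same)

lemma pathsM_down: assumes cr: "critical M \<alpha>" and ad: "\<alpha> div 3 = Suc n" and bd: "\<beta> div 3 = n"
  and p: "p \<in> pathsM d I Sc M \<alpha> \<beta>"
  shows "\<alpha> = 3*n+3 \<and> \<beta> = 3*n"
proof -
  from p have ne: "p \<noteq> []" and hd: "hd p = \<alpha>" and lst: "last p = \<beta>"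
    and sc: "successively (edgeM d I Sc M) p" unfolding pathsM_def by auto
  obtain xs where pxs: "p = \<alpha> # xs" using ne hd by (cases p) auto
  have "\<alpha> \<noteq> \<beta>" using ad bd by auto
  then have xne: "xs \<noteq> []" using pxs lst by auto
  have lx: "last xs = \<beta>" using lst pxs xne by simp
  from path_L[of \<alpha> xs] sc pxs xne lx
  have "(\<alpha> mod 3 = 0 \<and> \<beta> mod 3 = 0 \<and> \<beta> < \<alpha>) \<or> (\<beta>, \<alpha>) \<in> M" by simp
  then show ?thesis
  proof
    assume "\<alpha> mod 3 = 0 \<and> \<beta> mod 3 = 0 \<and> \<beta> < \<alpha>" with ad bd show ?thesis
      using dm3[of \<alpha>] dm3[of \<beta>] by linarith
  next
    assume "(\<beta>, \<alpha>) \<in> M"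
    then have "\<alpha> \<in> snd ` M" by force
    with cr show ?thesis unfolding critical_def by blast
  qed
qed

lemma pathsM_A: "pathsM d I Sc M (3*n+3) (3*n) =
   (if edge d I Sc (3*n+3) (3*n) then {[3*n+3, 3*n]} else {})"
proof -
  have n1: "(3*n+3, 3*n) \<notin> M" by (rule notM) simp
  have n2: "(3*n, 3*n+3) \<notin> M" by (rule notM) simp
  have eM: "edgeM d I Sc M (3*n+3) (3*n) \<longleftrightarrow> edge d I Sc (3*n+3) (3*n)"
    unfolding edgeM_def using n1 n2 by blast
  have fw: "p = [3*n+3, 3*n] \<and> edge d I Sc (3*n+3) (3*n)" if p: "p \<in> pathsM d I Sc M (3*n+3) (3*n)" for p
  proof -
    from p have ne: "p \<noteq> []" and hd: "hd p = 3*n+3" and lst: "last p = 3*n"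
      and sc: "successively (edgeM d I Sc M) p" unfolding pathsM_def by auto
    obtain xs where pxs: "p = (3*n+3) # xs" using ne hd by (cases p) auto
    then have "xs \<noteq> []" using lst by auto
    then obtain b ys where xs: "xs = b # ys" by (cases xs) auto
    have ab: "edgeM d I Sc M (3*n+3) b" and sb: "successively (edgeM d I Sc M) (b # ys)"
      using sc pxs xs by auto
    have b: "b = 3*n"
    proof -
      from edgeM_cases[OF ab] show ?thesis
      proof
        assume "(3*n+3) mod 3 = 0 \<and> 3 \<le> 3*n+3 \<and> b = 3*n+3 - 3" then show ?thesis by simp
      next
        assume "(b, 3*n+3) \<in> M"
        then have "(3*n+3) mod 3 = 1" using M_props by blast
        then show ?thesis by simp
      qed
    qed
    have l2: "last (b # ys) = 3*n" using lst pxs xs by simp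
    have "b # ys \<in> pathsM d I Sc M (3*n) (3*n)"
      unfolding pathsM_def using sb b l2 by simp
    then have bys: "b # ys = [3*n]" using path_same by blast
    have "p = [3*n+3, 3*n]" using pxs xs bys by simp
    moreover have "edge d I Sc (3*n+3) (3*n)" using ab b eM by simp
    ultimately show ?thesis by simp
  qed
  show ?thesis
  proof (cases "edge d I Sc (3*n+3) (3*n)")
    case True
    have "[3*n+3, 3*n] \<in> pathsM d I Sc M (3*n+3) (3*n)"
      unfolding pathsM_def using True eM by simp
    show ?thesis
    proof (rule set_eqI)
      fix p show "p \<in> pathsM d I Sc M (3*n+3) (3*n) \<longleftrightarrow>
         p \<in> (if edge d I Sc (3*n+3) (3*n) then {[3*n+3, 3*n]} else {})"
        using fw[of p] True \<open>[3*n+3, 3*n] \<in> pathsM d I Sc M (3*n+3) (3*n)\<close> by auto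
    qed
  next
    case False
    show ?thesis
    proof (rule set_eqI)
      fix p show "p \<in> pathsM d I Sc M (3*n+3) (3*n) \<longleftrightarrow>
         p \<in> (if edge d I Sc (3*n+3) (3*n) then {[3*n+3, 3*n]} else {})"
        using fw[of p] False by auto
    qed
  qed
qed

lemma Gamma_A: assumes y: "y \<in> A (Suc n)"
  shows "Gamma d I Sc M (3*n) (3*n+3) y = d (Suc n) y"
proof -
  obtain u where u: "u \<in> D (Suc n)" "y = Phi (Suc n) u" using y A_def by auto
  have "e (Suc n) u \<in> D n" using ein[OF u(1)] by simp
  then have dy: "d (Suc n) y \<in> Sc (3*n)" using Phich[OF u(1)] u(2) by (simp add: A_def)
  have pr: "proj I Sc (3*n) (d (Suc n) y) = d (Suc n) y"
    using proj_self[OF dy, of n "3*n"] by (simp add: I_iff)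
  have bdy: "bd d I Sc (3*n) (3*n+3) y = d (Suc n) y" using pr by (simp add: bd_eq)
  show ?thesis
  proof (cases "edge d I Sc (3*n+3) (3*n)")
    case True
    have n2: "(3*n, 3*n+3) \<notin> M" by (rule notM) simp
    have st: "stepM d I Sc M (3*n+3) (3*n) y = d (Suc n) y" using bdy n2 by (simp add: stepM_def)
    show ?thesis unfolding Gamma_def pathsM_A using True st by simp
  next
    case False
    have "3*n+3 \<in> I (Suc n)" "3*n \<in> I n" by (simp_all add: I_iff)
    then have "\<forall>x\<in>Sc (3*n+3). bd d I Sc (3*n) (3*n+3) x = 0" using False unfolding edge_def by blast
    then have "d (Suc n) y = 0" using bdy y by simp
    then show ?thesis unfolding Gamma_def pathsM_A using False by simp
  qed
qed

lemma zero_cell: assumes a: "\<alpha> \<in> I n" and ne: "\<alpha> \<noteq> 3*n" and cr: "critical M \<alpha>"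
  shows "Sc \<alpha> = {0}"
proof -
  have "\<alpha> = 3*n+1 \<or> \<alpha> = 3*n+2" using a ne by (auto simp: I_def)
  then show ?thesis
  proof
    assume al: "\<alpha> = 3*n+1"
    have "W (Suc n) = {0}"
    proof (rule ccontr)
      assume "W (Suc n) \<noteq> {0}"
      then have "(3*n+5, 3*n+1) \<in> M" by (rule M_intro)
      then have "\<alpha> \<in> snd ` M" using al by force
      with cr show False unfolding critical_def by blast
    qed
    then have "Z n \<subseteq> {0}"
    proof -
      assume W0: "W (Suc n) = {0}"
      show "Z n \<subseteq> {0}"
      proof
        fix z assume z: "z \<in> Z n"
        then have "s n z \<in> W (Suc n)" by (simp add: W_def)
        then have "s n z = 0" using W0 by auto
        then have "d (Suc n) (s n z) = 0" by simp
        then show "z \<in> {0}" using dsZ[OF z] by simp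
      qed
    qed
    moreover have "0 \<in> Z n" using real_vector.subspace_0[OF Z_sub] .
    ultimately show ?thesis using al by auto
  next
    assume al: "\<alpha> = 3*n+2"
    show ?thesis
    proof (cases n)
      case 0 then show ?thesis using al by (simp add: Sc_def W_def)
    next
      case (Suc m)
      have aeq: "\<alpha> = 3*m+5" using al Suc by simp
      have "W (Suc m) = {0}"
      proof (rule ccontr)
        assume "W (Suc m) \<noteq> {0}"
        then have "(3*m+5, 3*m+1) \<in> M" by (rule M_intro)
        with aeq have "\<alpha> \<in> fst ` M" by force
        with cr show False unfolding critical_def by blast
      qed
      then show ?thesis unfolding aeq Sc_simps(5) .
    qed
  qed
qed

lemma crit_fin: "finite {\<alpha> \<in> I n. critical M \<alpha>}" by simp

lemma crit_A_mem: "3*n \<in> {\<alpha> \<in> I n. critical M \<alpha>}" using crit_A by (simp add: I_iff)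

lemma morse_bd_A: assumes x: "x \<in> A (Suc n)"
  shows "morse_bd d I Sc M (Suc n) x = d (Suc n) x"
proof -
  have xS: "x \<in> Sc (3*n+3)" using x by simp
  have I3: "3*n+3 \<in> I (Suc n)" by (simp add: I_iff)
  have px: "proj I Sc (3*n+3) x = x" using proj_self[OF xS I3 I3] by simp
  have trm: "Gamma d I Sc M \<beta> \<alpha> (proj I Sc \<alpha> x) = (if \<alpha> = 3*n+3 \<and> \<beta> = 3*n then d (Suc n) x else 0)"
    if a: "\<alpha> \<in> {\<alpha> \<in> I (Suc n). critical M \<alpha>}" and b: "\<beta> \<in> {\<beta> \<in> I n. critical M \<beta>}" for \<alpha> \<beta>
  proof (cases "\<alpha> = 3*n+3 \<and> \<beta> = 3*n")
    case True
    then show ?thesis using Gamma_A[OF x] px by simp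
  next
    case False
    have "pathsM d I Sc M \<alpha> \<beta> = {}"
      using pathsM_down[of \<alpha> n \<beta>] a b False by (auto simp: I_iff)
    moreover have "(if \<alpha> = 3*n+3 \<and> \<beta> = 3*n then d (Suc n) x else 0) = 0"
      using False by (rule if_not_P)
    ultimately show ?thesis by (simp add: Gamma_def)
  qed
  have "morse_bd d I Sc M (Suc n) x =
     (\<Sum>\<alpha>\<in>{\<alpha> \<in> I (Suc n). critical M \<alpha>}. \<Sum>\<beta>\<in>{\<beta> \<in> I n. critical M \<beta>}.
        (if \<alpha> = 3*n+3 \<and> \<beta> = 3*n then d (Suc n) x else 0))"
    unfolding morse_bd_def by (simp only: nat.simps if_False diff_Suc_1, intro sum.cong refl) (rule trm; assumption)
  also have "\<dots> = d (Suc n) x"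
  proof (rule sum2_delta)
    have e3: "3 * Suc n = 3*n+3" by simp
    show "3*n+3 \<in> {\<alpha> \<in> I (Suc n). critical M \<alpha>}" using crit_A_mem[of "Suc n"] unfolding e3 .
    show "3*n \<in> {\<beta> \<in> I n. critical M \<beta>}" using crit_A_mem .
  qed simp_all
  finally show ?thesis .
qed

lemma morse_Phi_A: assumes x: "x \<in> A n"
  shows "morse_Phi d I Sc M n x = x"
proof -
  have xS: "x \<in> Sc (3*n)" using x by simp
  have I3: "3*n \<in> I n" by (simp add: I_iff)
  have inner: "(\<Sum>\<beta>\<in>I n. Gamma d I Sc M \<beta> \<alpha> (proj I Sc \<alpha> x)) = (if \<alpha> = 3*n then x else 0)"
    if a: "\<alpha> \<in> {\<alpha> \<in> I n. critical M \<alpha>}" for \<alpha>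
  proof -
    have aI: "\<alpha> \<in> I n" using a by simp
    have "(\<Sum>\<beta>\<in>I n. Gamma d I Sc M \<beta> \<alpha> (proj I Sc \<alpha> x)) =
          (\<Sum>\<beta>\<in>I n. if \<alpha> = \<beta> then proj I Sc \<alpha> x else 0)"
      by (rule sum.cong) (use aI in \<open>auto simp: Gamma_same I_iff\<close>)
    also have "\<dots> = proj I Sc \<alpha> x" using aI by (simp add: sum.delta')
    also have "\<dots> = (if \<alpha> = 3*n then x else 0)" using proj_self[OF xS I3 aI] .
    finally show ?thesis .
  qed
  have "morse_Phi d I Sc M n x = (\<Sum>\<alpha>\<in>{\<alpha> \<in> I n. critical M \<alpha>}. if \<alpha> = 3*n then x else 0)"
    unfolding morse_Phi_def by (rule sum.cong[OF refl]) (rule inner)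
  also have "\<dots> = x" using crit_A_mem[of n] by (simp add: sum.delta)
  finally show ?thesis .
qed

lemma morse_Psi_eq: assumes x: "x \<in> C n"
  shows "morse_Psi d I Sc M n x = Phi n (Psi n x)"
proof -
  have inner: "(\<Sum>\<beta>\<in>{\<beta> \<in> I n. critical M \<beta>}. Gamma d I Sc M \<beta> \<alpha> (proj I Sc \<alpha> x))
     = (if \<alpha> = 3*n then Phi n (Psi n x) else 0)"
    if aI: "\<alpha> \<in> I n" for \<alpha>
  proof -
    have "(\<Sum>\<beta>\<in>{\<beta> \<in> I n. critical M \<beta>}. Gamma d I Sc M \<beta> \<alpha> (proj I Sc \<alpha> x)) =
          (\<Sum>\<beta>\<in>{\<beta> \<in> I n. critical M \<beta>}. if \<alpha> = \<beta> then proj I Sc \<alpha> x else 0)"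
      by (rule sum.cong) (use aI in \<open>auto simp: Gamma_same I_iff\<close>)
    also have "\<dots> = (if critical M \<alpha> then proj I Sc \<alpha> x else 0)" using aI by (simp add: sum.delta')
    also have "\<dots> = (if \<alpha> = 3*n then Phi n (Psi n x) else 0)"
    proof (cases "\<alpha> = 3*n")
      case True
      then show ?thesis using crit_A proj_canon[OF x aI] by (simp add: canon_def)
    next
      case False
      have "critical M \<alpha> \<Longrightarrow> proj I Sc \<alpha> x = 0"
        using zero_cell[OF aI False] proj_in[OF x aI] by auto
      then show ?thesis using False by simp
    qed
    finally show ?thesis .
  qed
  have "morse_Psi d I Sc M n x = (\<Sum>\<alpha>\<in>I n. if \<alpha> = 3*n then Phi n (Psi n x) else 0)"
    unfolding morse_Psi_def by (rule sum.cong[OF refl]) (rule inner)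
  also have "\<dots> = Phi n (Psi n x)" by (simp add: sum.delta I_iff)
  finally show ?thesis .
qed

lemma carrier_eq: "morse_carrier I Sc M n = A n"
proof -
  have U: "(\<Union>\<alpha>\<in>{\<alpha> \<in> I n. critical M \<alpha>}. Sc \<alpha>) = A n"
  proof
    show "(\<Union>\<alpha>\<in>{\<alpha> \<in> I n. critical M \<alpha>}. Sc \<alpha>) \<subseteq> A n"
    proof
      fix v assume "v \<in> (\<Union>\<alpha>\<in>{\<alpha> \<in> I n. critical M \<alpha>}. Sc \<alpha>)"
      then obtain \<alpha> where a: "\<alpha> \<in> I n" "critical M \<alpha>" "v \<in> Sc \<alpha>" by auto
      show "v \<in> A n"
      proof (cases "\<alpha> = 3*n")
        case True then show ?thesis using a by simp
      next
        case False
        then have "v = 0" using zero_cell[OF a(1) False a(2)] a(3) by auto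
        then show ?thesis using real_vector.subspace_0[OF A_sub] by simp
      qed
    qed
    show "A n \<subseteq> (\<Union>\<alpha>\<in>{\<alpha> \<in> I n. critical M \<alpha>}. Sc \<alpha>)"
      using crit_A_mem[of n] by force
  qed
  show ?thesis unfolding morse_carrier_def U using real_vector.span_eq_iff A_sub by blast
qed

lemma matching: "morse_matching d I Sc M"
proof -
  have 1: "\<forall>(\<alpha>, \<beta>)\<in>M. edge d I Sc \<alpha> \<beta>"
  proof (clarify)
    fix \<alpha> \<beta> assume "(\<alpha>, \<beta>) \<in> M"
    then obtain n where ab: "\<alpha> = 3*n+5" "\<beta> = 3*n+1" and W: "W (Suc n) \<noteq> {0}"
      unfolding M_def by auto
    have "0 \<in> W (Suc n)" using real_vector.subspace_0[OF W_sub] .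
    then obtain x where x: "x \<in> W (Suc n)" "x \<noteq> 0" using W by auto
    then obtain z where z: "z \<in> Z n" "x = s n z" by (auto simp: W_def)
    have zn: "z \<noteq> 0" using z x by auto
    have "z \<in> Sc (3*n+1)" using z by simp
    then have "proj I Sc (3*n+1) z = z" using proj_self[of z "3*n+1" n "3*n+1"] by (simp add: I_iff)
    then have "bd d I Sc \<beta> \<alpha> x = z" using ab z dsZ by (simp add: bd_eq)
    moreover have "\<alpha> \<in> I (Suc n)" "\<beta> \<in> I n" using ab by (simp_all add: I_iff)
    ultimately show "edge d I Sc \<alpha> \<beta>" unfolding edge_def using x ab zn by auto
  qed
  have 2: "\<forall>(\<alpha>, \<beta>)\<in>M. \<forall>(\<alpha>', \<beta>')\<in>M. (\<alpha> = \<alpha>' \<or> \<alpha> = \<beta>' \<or> \<beta> = \<alpha>' \<or> \<beta> = \<beta>') \<longrightarrow> (\<alpha>, \<beta>) = (\<alpha>', \<beta>')"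
  proof (clarify)
    fix \<alpha> \<beta> \<alpha>' \<beta>' assume "(\<alpha>, \<beta>) \<in> M" "(\<alpha>', \<beta>') \<in> M" and H: "\<alpha> = \<alpha>' \<or> \<alpha> = \<beta>' \<or> \<beta> = \<alpha>' \<or> \<beta> = \<beta>'"
    then obtain n n' where "\<alpha> = 3*n+5" "\<beta> = 3*n+1" "\<alpha>' = 3*n'+5" "\<beta>' = 3*n'+1"
      unfolding M_def by auto
    with H show "\<alpha> = \<alpha>' \<and> \<beta> = \<beta>'" by presburger
  qed
  have 3: "\<forall>(\<alpha>, \<beta>)\<in>M. bij_betw (bd d I Sc \<beta> \<alpha>) (Sc \<alpha>) (Sc \<beta>)"
  proof (clarify)
    fix \<alpha> \<beta> assume "(\<alpha>, \<beta>) \<in> M"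
    then obtain n where ab: "\<alpha> = 3*n+5" "\<beta> = 3*n+1" unfolding M_def by auto
    have key: "bd d I Sc \<beta> \<alpha> (s n z) = z" if z: "z \<in> Z n" for z
    proof -
      have "z \<in> Sc (3*n+1)" using z by simp
      then have "proj I Sc (3*n+1) z = z" using proj_self[of z "3*n+1" n "3*n+1"] by (simp add: I_iff)
      then show ?thesis using ab z dsZ by (simp add: bd_eq)
    qed
    have SA: "Sc \<alpha> = s n ` Z n" using ab by (simp add: W_def)
    have SB: "Sc \<beta> = Z n" using ab by simp
    show "bij_betw (bd d I Sc \<beta> \<alpha>) (Sc \<alpha>) (Sc \<beta>)"
      unfolding SA SB bij_betw_def
    proof
      show "inj_on (bd d I Sc \<beta> \<alpha>) (s n ` Z n)"
        by (rule inj_onI) (auto simp: key)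
      have "bd d I Sc \<beta> \<alpha> ` s n ` Z n = (\<lambda>z. z) ` Z n"
        unfolding image_image using key by (rule image_cong[OF refl])
      then show "bd d I Sc \<beta> \<alpha> ` s n ` Z n = Z n" by simp
    qed
  qed
  have 4: "partial_order_on (I n) {(\<alpha>, \<beta>). \<alpha> \<in> I n \<and> \<beta> \<in> I n \<and> pathsM d I Sc M \<alpha> \<beta> \<noteq> {}}" for n
  proof -
    have pe: "pathsM d I Sc M \<alpha> \<beta> \<noteq> {} \<longleftrightarrow> \<alpha> = \<beta>" if "\<alpha> \<in> I n" "\<beta> \<in> I n" for \<alpha> \<beta>
    proof -
      have "\<alpha> div 3 = \<beta> div 3" using that by (simp add: I_iff)
      then show ?thesis by (simp add: pathsM_same)
    qed
    have "{(\<alpha>, \<beta>). \<alpha> \<in> I n \<and> \<beta> \<in> I n \<and> pathsM d I Sc M \<alpha> \<beta> \<noteq> {}} = {(\<alpha>, \<beta>). \<alpha> \<in> I n \<and> \<beta> = \<alpha>}"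
      using pe by blast
    then show ?thesis
      unfolding partial_order_on_def preorder_on_def refl_on_def trans_def antisym_def by auto
  qed
  show ?thesis unfolding morse_matching_def using 1 2 3 4 by blast
qed

end

theorem mainTheorem1:
  fixes C :: "nat \<Rightarrow> 'v::real_inner set" and d :: "nat \<Rightarrow> 'v \<Rightarrow> 'v"
    and D :: "nat \<Rightarrow> 'w::real_inner set" and e :: "nat \<Rightarrow> 'w \<Rightarrow> 'w"
    and Psi :: "nat \<Rightarrow> 'v \<Rightarrow> 'w" and Phi :: "nat \<Rightarrow> 'w \<Rightarrow> 'v" and h :: "nat \<Rightarrow> 'v \<Rightarrow> 'v"
  assumes "chain_complex C d" and "chain_complex D e"
    and "deformation_retract C d D e Psi Phi h"
  shows "\<exists>(I :: nat \<Rightarrow> nat set) (S :: nat \<Rightarrow> 'v set) (M :: (nat \<times> nat) set).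
           based_complex C d I S \<and> morse_matching d I S M \<and>
           (\<exists>f g. chain_iso D e (morse_carrier I S M) (morse_bd d I S M) f \<and> chain_iso C d C d g \<and>
              (\<forall>n. \<forall>x\<in>C n. f n (Psi n x) = morse_Psi d I S M n (g n x)) \<and>
              (\<forall>n. \<forall>y\<in>D n. g n (Phi n y) = morse_Phi d I S M n (f n y)))"
proof -
  interpret X: dr C d D e Psi Phi h using assms by (unfold_locales)
  have ci1: "chain_iso D e (morse_carrier X.I X.Sc X.M) (morse_bd d X.I X.Sc X.M) Phi"
    unfolding chain_iso_def chain_map_def
  proof (intro conjI allI ballI)
    fix n show "lin_on (D n) (Phi n)" using X.Philin .
  next
    fix n y assume "y \<in> D n"
    then show "Phi n y \<in> morse_carrier X.I X.Sc X.M n" unfolding X.carrier_eq X.A_def by (rule imageI)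
  next
    fix n y assume y: "y \<in> D n"
    show "morse_bd d X.I X.Sc X.M n (Phi n y) = Phi (n - 1) (e n y)"
    proof (cases n)
      case 0 then show ?thesis using y X.e0 by (simp add: morse_bd_def)
    next
      case (Suc m)
      have "Phi n y \<in> X.A n" unfolding X.A_def using y by (rule imageI)
      then have "Phi n y \<in> X.A (Suc m)" using Suc by simp
      then show ?thesis using X.morse_bd_A X.Phich[OF y] Suc by simp
    qed
  next
    fix n
    show "bij_betw (Phi n) (D n) (morse_carrier X.I X.Sc X.M n)"
      unfolding X.carrier_eq X.A_def bij_betw_def
      using X.PsiPhi by (metis inj_on_inverseI)
  qed
  have ci2: "chain_iso C d C d (\<lambda>n x. x)"
    unfolding chain_iso_def chain_map_def lin_on_def by (simp add: bij_betw_def)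
  have P1: "\<forall>n. \<forall>x\<in>C n. Phi n (Psi n x) = morse_Psi d X.I X.Sc X.M n ((\<lambda>n x. x) n x)"
    using X.morse_Psi_eq by simp
  have P2: "\<forall>n. \<forall>y\<in>D n. (\<lambda>n x. x) n (Phi n y) = morse_Phi d X.I X.Sc X.M n (Phi n y)"
  proof (intro allI ballI)
    fix n y assume y: "y \<in> D n"
    have "Phi n y \<in> X.A n" unfolding X.A_def using y by (rule imageI)
    then show "(\<lambda>n x. x) n (Phi n y) = morse_Phi d X.I X.Sc X.M n (Phi n y)" using X.morse_Phi_A by simp
  qed
  show ?thesis
    apply (rule exI[of _ X.I], rule exI[of _ X.Sc], rule exI[of _ X.M])
    using X.based X.matching ci1 ci2 P1 P2 by blast
qed

end
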